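(* Let $Z$ be a smooth extremal assignment of order $n$ with contraction indicator $\mathcal{C}$, and let $B_1,\dots,B_k$ be the maximal elements of $\mathcal{C}$. Suppose one of the following holds: (1) there is $j\in[n]$ with $j\notin\bigcup_{i=1}^k B_i$; (2) there is $j\in[n]$ contained in exactly one of $B_1,\dots,B_k$; (3) $|B_i|<n/2$ for all $i$. Then there exists weight data $A$ with $Z\subset Z_A$ (i.e. $Z(G)\subset Z_A(G)$ for all $G\in S(n)$).
   Context: $[n]=\{1,\dots,n\}$. A stable $n$-labeled tree is a finite tree with $n$ leaves labeled bijectively by $[n]$, all internal vertices of degree $\ge 3$; $V(G)$ its internal vertices; $S(n)$ the set of such trees up to label-preserving isomorphism, $S_2(n)$ those with 2 internal vertices; $\ell(v)$ is the set of labels of leaves adjacent to $v$. $G\rightsquigarrow G'$: $G'$ obtained by collapsing connected sets of internal vertices, inducing surjection $\pi:V(G)\to V(G')$; $v\rightsquigarrow v'$ means $\pi(v)=v'$. An extremal assignment of order $n$: rule $Z(G)\subset V(G)$ for $G\in S(n)$ with (a) $Z(G)\ne V(G)$, (b) if $G\rightsquigarrow G'$ and $\pi^{-1}(v')=\{v_1,\dots,v_k\}$ then $v'\in Z(G')\iff v_1,\dots,v_k\in Z(G)$. $Z$ is smooth if for every $G$, $v\in Z(G)$ there are $G'\in S_2(n)$, $v'\in Z(G')$ with $G\rightsquigarrow G'$, $v\rightsquigarrow v'$. The contraction indicator of $Z$ is $\mathcal{C}=\{\ell(v):G\in S_2(n),v\in Z(G)\}$. Weight data: $A=(a_1,\dots,a_n)$,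 $a_i\in\mathbb{Q}\cap(0,1]$, $\sum a_i>2$. A tail of $G$ is a nonempty connected $T\subset V(G)$ joined to $V(G)\setminus T$ by exactly one edge; $\ell(T)$ the labels of leaves adjacent to $T$. $Z_A(G)=\{v\in V(G):\exists$ tail $T\ni v$ with $\sum_{i\in\ell(T)}a_i\le1\}$. *)

theory Defs
  imports Complex_Main
begin

text \<open>Internal vertices are natural numbers,
  internal edges are two-element sets of internal vertices, and leaf i (for i in {1..n})
  is attached to the internal vertex leafmap i. Trees are considered concretely;
  label-preserving isomorphisms are particular contractions (bijective pi), so
  axiom (b) of an extremal assignment forces isomorphism invariance.\<close>

record stree =
  verts :: "nat set"
  edges :: "nat set set"
  leafmap :: "nat \<Rightarrow> nat"

definition conn_in :: "stree \<Rightarrow> nat set \<Rightarrow> bool" where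
  "conn_in G T \<longleftrightarrow>
     (\<forall>u\<in>T. \<forall>w\<in>T. (u, w) \<in> {(x, y). {x, y} \<in> edges G \<and> x \<in> T \<and> y \<in> T}\<^sup>*)"

definition is_stree :: "nat \<Rightarrow> stree \<Rightarrow> bool" where
  "is_stree n G \<longleftrightarrow>
     finite (verts G) \<and> verts G \<noteq> {} \<and>
     (\<forall>e\<in>edges G. e \<subseteq> verts G \<and> card e = 2) \<and>
     conn_in G (verts G) \<and>
     card (edges G) + 1 = card (verts G) \<and>
     (\<forall>i\<in>{1..n}. leafmap G i \<in> verts G) \<and>
     (\<forall>v\<in>verts G. card {e\<in>edges G. v \<in> e} + card {i\<in>{1..n}. leafmap G i = v} \<ge> 3)"

definition S :: "nat \<Rightarrow> stree set" where
  "S n = {G. is_stree n G}"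

definition S2 :: "nat \<Rightarrow> stree set" where
  "S2 n = {G \<in> S n. card (verts G) = 2}"

definition lab :: "nat \<Rightarrow> stree \<Rightarrow> nat \<Rightarrow> nat set" where
  "lab n G v = {i\<in>{1..n}. leafmap G i = v}"

definition labs :: "nat \<Rightarrow> stree \<Rightarrow> nat set \<Rightarrow> nat set" where
  "labs n G T = {i\<in>{1..n}. leafmap G i \<in> T}"

definition contracts :: "nat \<Rightarrow> stree \<Rightarrow> stree \<Rightarrow> (nat \<Rightarrow> nat) \<Rightarrow> bool" where
  "contracts n G G' \<pi> \<longleftrightarrow>
     \<pi> ` verts G = verts G' \<and>
     (\<forall>v'\<in>verts G'. conn_in G {v\<in>verts G. \<pi> v = v'}) \<and>
     (\<forall>i\<in>{1..n}. leafmap G' i = \<pi> (leafmap G i)) \<and>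
     edges G' = {{\<pi> u, \<pi> w} | u w. {u, w} \<in> edges G \<and> \<pi> u \<noteq> \<pi> w}"

definition extremal_assignment :: "nat \<Rightarrow> (stree \<Rightarrow> nat set) \<Rightarrow> bool" where
  "extremal_assignment n Z \<longleftrightarrow>
     (\<forall>G\<in>S n. Z G \<subseteq> verts G \<and> Z G \<noteq> verts G) \<and>
     (\<forall>G\<in>S n. \<forall>G'\<in>S n. \<forall>\<pi>. contracts n G G' \<pi> \<longrightarrow>
        (\<forall>v'\<in>verts G'. v' \<in> Z G' \<longleftrightarrow> (\<forall>v\<in>verts G. \<pi> v = v' \<longrightarrow> v \<in> Z G)))"

definition smooth :: "nat \<Rightarrow> (stree \<Rightarrow> nat set) \<Rightarrow> bool" where
  "smooth n Z \<longleftrightarrow>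
     (\<forall>G\<in>S n. \<forall>v\<in>Z G. \<exists>G'\<in>S2 n. \<exists>\<pi>. contracts n G G' \<pi> \<and> \<pi> v \<in> Z G')"

definition contraction_indicator :: "nat \<Rightarrow> (stree \<Rightarrow> nat set) \<Rightarrow> nat set set" where
  "contraction_indicator n Z = {lab n G v | G v. G \<in> S2 n \<and> v \<in> Z G}"

definition maximal_elems :: "nat set set \<Rightarrow> nat set set" where
  "maximal_elems C = {B\<in>C. \<forall>B'\<in>C. B \<subseteq> B' \<longrightarrow> B' = B}"

definition weight_data :: "nat \<Rightarrow> (nat \<Rightarrow> rat) \<Rightarrow> bool" where
  "weight_data n a \<longleftrightarrow> (\<forall>i\<in>{1..n}. 0 < a i \<and> a i \<le> 1) \<and> sum a {1..n} > 2"

definition is_tail :: "stree \<Rightarrow> nat set \<Rightarrow> bool" where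
  "is_tail G T \<longleftrightarrow> T \<noteq> {} \<and> T \<subseteq> verts G \<and> conn_in G T \<and>
     card {e\<in>edges G. e \<inter> T \<noteq> {} \<and> e - T \<noteq> {}} = 1"

definition ZA :: "nat \<Rightarrow> (nat \<Rightarrow> rat) \<Rightarrow> stree \<Rightarrow> nat set" where
  "ZA n a G = {v\<in>verts G. \<exists>T. is_tail G T \<and> v \<in> T \<and> sum a (labs n G T) \<le> 1}"

end

theory Submission
  imports Defs
begin


definition P2 :: "nat set \<Rightarrow> stree" where
  "P2 B = \<lparr>verts = {0,1}, edges = {{0,1}}, leafmap = (\<lambda>i. if i \<in> B then 0 else 1)\<rparr>"

definition P3 :: "nat set \<Rightarrow> nat set \<Rightarrow> stree" where
  "P3 X Y = \<lparr>verts = {0,1,2}, edges = {{0,1},{1,2}},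
     leafmap = (\<lambda>i. if i \<in> X then 0 else if i \<in> Y then 2 else 1)\<rparr>"

lemma rt_edge:
  assumes "{x,y} \<in> edges G" "x \<in> T" "y \<in> T"
  shows "(x,y) \<in> {(x, y). {x, y} \<in> edges G \<and> x \<in> T \<and> y \<in> T}\<^sup>*"
  using assms by (intro r_into_rtrancl) auto

lemma P2_S:
  assumes "B \<subseteq> {1..n}" "2 \<le> card B" "2 \<le> card ({1..n} - B)"
  shows "P2 B \<in> S n"
proof -
  have c: "conn_in (P2 B) {0,1}"
    unfolding conn_in_def
  proof (intro ballI)
    fix u w :: nat assume "u \<in> {0,1}" "w \<in> {0,1}"
    have e1: "{0::nat,1} \<in> edges (P2 B)" "{1::nat,0} \<in> edges (P2 B)" by (auto simp: P2_def insert_commute)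
    let ?R = "{(x, y). {x, y} \<in> edges (P2 B) \<and> x \<in> {0,1} \<and> y \<in> {0,1}}"
    have r: "(0,1) \<in> ?R\<^sup>*" "(1,0) \<in> ?R\<^sup>*"
      by (rule rt_edge[OF e1(1)]; simp) (rule rt_edge[OF e1(2)]; simp)
    show "(u, w) \<in> ?R\<^sup>*"
      using \<open>u \<in> {0,1}\<close> \<open>w \<in> {0,1}\<close> r by auto
  qed
  have d0: "{e \<in> edges (P2 B). (0::nat) \<in> e} = {{0,1}}" "{e \<in> edges (P2 B). (1::nat) \<in> e} = {{0,1}}"
    by (auto simp: P2_def)
  have l0: "{i\<in>{1..n}. leafmap (P2 B) i = 0} = B" using assms(1) by (auto simp: P2_def)
  have l1: "{i\<in>{1..n}. leafmap (P2 B) i = 1} = {1..n} - B" by (auto simp: P2_def)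
  show ?thesis unfolding S_def is_stree_def
    using c d0 l0 l1 assms by (auto simp: P2_def)
qed

lemma P3_S:
  assumes "X \<subseteq> {1..n}" "Y \<subseteq> {1..n}" "X \<inter> Y = {}" "2 \<le> card X" "2 \<le> card Y"
    "{1..n} - X - Y \<noteq> {}"
  shows "P3 X Y \<in> S n"
proof -
  have c: "conn_in (P3 X Y) {0,1,2}"
    unfolding conn_in_def
  proof (intro ballI)
    fix u w :: nat assume "u \<in> {0,1,2}" "w \<in> {0,1,2}"
    let ?R = "{(x, y). {x, y} \<in> edges (P3 X Y) \<and> x \<in> {0,1,2} \<and> y \<in> {0,1,2}}"
    have e1: "{0::nat,1} \<in> edges (P3 X Y)" "{1::nat,0} \<in> edges (P3 X Y)"
      "{1::nat,2} \<in> edges (P3 X Y)" "{2::nat,1} \<in> edges (P3 X Y)" by (auto simp: P3_def insert_commute)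
    have r: "(0,1) \<in> ?R\<^sup>*" "(1,0) \<in> ?R\<^sup>*" "(1,2) \<in> ?R\<^sup>*" "(2,1) \<in> ?R\<^sup>*"
      apply (rule rt_edge[OF e1(1)]; simp) apply (rule rt_edge[OF e1(2)]; simp)
        apply (rule rt_edge[OF e1(3)]; simp) apply (rule rt_edge[OF e1(4)]; simp) done
    have r2: "(0,2) \<in> ?R\<^sup>*" "(2,0) \<in> ?R\<^sup>*" using rtrancl_trans[OF r(1) r(3)] rtrancl_trans[OF r(4) r(2)] by auto
    have "u = 0 \<or> u = 1 \<or> u = 2" "w = 0 \<or> w = 1 \<or> w = 2"
      using \<open>u \<in> {0,1,2}\<close> \<open>w \<in> {0,1,2}\<close> by auto
    then show "(u, w) \<in> ?R\<^sup>*"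
      by (elim disjE) (simp_all only: r r2 rtrancl.rtrancl_refl)
  qed
  have d0: "{e \<in> edges (P3 X Y). (0::nat) \<in> e} = {{0,1}}" "{e \<in> edges (P3 X Y). (1::nat) \<in> e} = {{0,1},{1,2}}"
     "{e \<in> edges (P3 X Y). (2::nat) \<in> e} = {{1,2}}"
    by (auto simp: P3_def)
  have ne: "{0::nat,1} \<noteq> {1,2}" by (simp add: doubleton_eq_iff)
  have l0: "{i\<in>{1..n}. leafmap (P3 X Y) i = 0} = X" using assms(1) by (auto simp: P3_def)
  have l1: "{i\<in>{1..n}. leafmap (P3 X Y) i = 1} = {1..n} - X - Y" by (auto simp: P3_def)
  have l2: "{i\<in>{1..n}. leafmap (P3 X Y) i = 2} = Y" using assms(2,3) by (auto simp: P3_def)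
  have "card ({1..n} - X - Y) \<ge> 1" using assms(6) by (simp add: Suc_le_eq card_gt_0_iff)
  moreover have cs: "\<And>A::nat set. card {A} = 1" by simp
  moreover have c2: "card {{0::nat,1},{1,2}} = 2" using ne by simp
  ultimately have deg0: "\<forall>v\<in>{0::nat,1,2}. card {e\<in>edges (P3 X Y). v \<in> e} + card {i\<in>{1..n}. leafmap (P3 X Y) i = v} \<ge> 3"
    unfolding ball_simps d0 l0 l1 l2 c2 cs using assms(4,5) by simp
  have vv: "verts (P3 X Y) = {0,1,2}" by (simp add: P3_def)
  have deg: "\<forall>v\<in>verts (P3 X Y). card {e\<in>edges (P3 X Y). v \<in> e} + card {i\<in>{1..n}. leafmap (P3 X Y) i = v} \<ge> 3"
    using deg0 vv by simp
  have ed: "\<forall>e\<in>edges (P3 X Y). e \<subseteq> verts (P3 X Y) \<and> card e = 2" by (simp add: P3_def)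
  have ce: "card (edges (P3 X Y)) + 1 = card (verts (P3 X Y))" using ne by (simp add: P3_def)
  have lm: "\<forall>i\<in>{1..n}. leafmap (P3 X Y) i \<in> verts (P3 X Y)" by (simp add: P3_def)
  show ?thesis unfolding S_def is_stree_def mem_Collect_eq
    using deg ed ce lm c vv by simp
qed



lemma conn_single: "conn_in G {x}"
  unfolding conn_in_def by auto

lemma conn_pair: assumes "{x,y} \<in> edges G" shows "conn_in G {x,y}"
  unfolding conn_in_def
proof (intro ballI)
  fix u w assume "u \<in> {x,y}" "w \<in> {x,y}"
  let ?R = "{(a, b). {a, b} \<in> edges G \<and> a \<in> {x,y} \<and> b \<in> {x,y}}"
  have e2: "{y,x} \<in> edges G" using assms by (simp add: insert_commute)
  have "(x,y) \<in> ?R\<^sup>*" "(y,x) \<in> ?R\<^sup>*"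
    by (rule rt_edge[OF assms]; simp) (rule rt_edge[OF e2]; simp)
  then show "(u,w) \<in> ?R\<^sup>*" using \<open>u \<in> {x,y}\<close> \<open>w \<in> {x,y}\<close> by auto
qed

definition img_edges :: "stree \<Rightarrow> (nat \<Rightarrow> nat) \<Rightarrow> nat set set" where
  "img_edges G \<pi> = {{\<pi> u, \<pi> w} | u w. {u, w} \<in> edges G \<and> \<pi> u \<noteq> \<pi> w}"

lemma img_edgesI: "{u,w} \<in> edges G \<Longrightarrow> \<pi> u \<noteq> \<pi> w \<Longrightarrow> e = {\<pi> u, \<pi> w} \<Longrightarrow> e \<in> img_edges G \<pi>"
  unfolding img_edges_def by blast

lemma img_edgesE: "e \<in> img_edges G \<pi> \<Longrightarrow> (\<And>u w. {u,w} \<in> edges G \<Longrightarrow> \<pi> u \<noteq> \<pi> w \<Longrightarrow> e = {\<pi> u, \<pi> w} \<Longrightarrow> P) \<Longrightarrow> P"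
  unfolding img_edges_def by blast

lemma contracts_I:
  assumes "\<pi> ` verts G = verts G'" "\<forall>v'\<in>verts G'. conn_in G {v\<in>verts G. \<pi> v = v'}"
    "\<forall>i\<in>{1..n}. leafmap G' i = \<pi> (leafmap G i)" "edges G' = img_edges G \<pi>"
  shows "contracts n G G' \<pi>"
  using assms unfolding contracts_def img_edges_def by blast

lemma contr_P3_1:
  assumes "X \<subseteq> {1..n}" "Y \<subseteq> {1..n}" "X \<inter> Y = {}"
  shows "contracts n (P3 X Y) (P2 ({1..n} - Y)) (\<lambda>x. if x = 2 then 1 else 0)"
proof -
  define r :: "nat \<Rightarrow> nat" where "r = (\<lambda>x. if x = 2 then 1 else 0)"
  have f0: "{v\<in>verts (P3 X Y). r v = 0} = {0,1}" by (auto simp: P3_def r_def)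
  have f1: "{v\<in>verts (P3 X Y). r v = 1} = {2}" by (auto simp: P3_def r_def)
  have e01: "{0::nat,1} \<in> edges (P3 X Y)" by (simp add: P3_def)
  have conn: "\<forall>v'\<in>verts (P2 ({1..n} - Y)). conn_in (P3 X Y) {v\<in>verts (P3 X Y). r v = v'}"
    using f0 f1 conn_pair[OF e01] conn_single by (simp add: P2_def)
  have "img_edges (P3 X Y) r = {{0,1}}"
  proof (intro equalityI subsetI)
    fix e assume "e \<in> img_edges (P3 X Y) r"
    then show "e \<in> {{0,1}}"
      by (rule img_edgesE) (auto simp: P3_def doubleton_eq_iff r_def split: if_splits)
  next
    fix e assume "e \<in> {{0::nat,1}}"
    then show "e \<in> img_edges (P3 X Y) r"
      by (intro img_edgesI[of 1 2]) (auto simp: P3_def r_def)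
  qed
  then have ed: "edges (P2 ({1..n} - Y)) = img_edges (P3 X Y) r" by (simp add: P2_def)
  have im: "r ` verts (P3 X Y) = verts (P2 ({1..n} - Y))"
    by (auto simp: P3_def P2_def r_def)
  have lm: "\<forall>i\<in>{1..n}. leafmap (P2 ({1..n} - Y)) i = r (leafmap (P3 X Y) i)"
    using assms(3) by (auto simp: P3_def P2_def r_def)
  show ?thesis using contracts_I[OF im conn lm ed] unfolding r_def .
qed

lemma contr_P3_2:
  assumes "X \<subseteq> {1..n}" "Y \<subseteq> {1..n}" "X \<inter> Y = {}"
  shows "contracts n (P3 X Y) (P2 ({1..n} - X)) (\<lambda>x. if x = 0 then 1 else 0)"
proof -
  define r :: "nat \<Rightarrow> nat" where "r = (\<lambda>x. if x = 0 then 1 else 0)"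
  have f0: "{v\<in>verts (P3 X Y). r v = 0} = {1,2}" by (auto simp: P3_def r_def)
  have f1: "{v\<in>verts (P3 X Y). r v = 1} = {0}" by (auto simp: P3_def r_def)
  have e12: "{1::nat,2} \<in> edges (P3 X Y)" by (simp add: P3_def)
  have conn: "\<forall>v'\<in>verts (P2 ({1..n} - X)). conn_in (P3 X Y) {v\<in>verts (P3 X Y). r v = v'}"
    using f0 f1 conn_pair[OF e12] conn_single by (simp add: P2_def)
  have "img_edges (P3 X Y) r = {{0,1}}"
  proof (intro equalityI subsetI)
    fix e assume "e \<in> img_edges (P3 X Y) r"
    then show "e \<in> {{0,1}}"
      by (rule img_edgesE) (auto simp: P3_def doubleton_eq_iff r_def split: if_splits)
  next
    fix e assume "e \<in> {{0::nat,1}}"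
    then show "e \<in> img_edges (P3 X Y) r"
      by (intro img_edgesI[of 0 1]) (auto simp: P3_def r_def)
  qed
  then have ed: "edges (P2 ({1..n} - X)) = img_edges (P3 X Y) r" by (simp add: P2_def)
  have im: "r ` verts (P3 X Y) = verts (P2 ({1..n} - X))"
    by (auto simp: P3_def P2_def r_def)
  have lm: "\<forall>i\<in>{1..n}. leafmap (P2 ({1..n} - X)) i = r (leafmap (P3 X Y) i)"
    using assms(3) by (auto simp: P3_def P2_def r_def)
  show ?thesis using contracts_I[OF im conn lm ed] unfolding r_def .
qed

lemma contr_swap:
  "contracts n (P2 B) (P2 ({1..n} - B)) (\<lambda>x. if x = 0 then 1 else 0)"
proof -
  define r :: "nat \<Rightarrow> nat" where "r = (\<lambda>x. if x = 0 then 1 else 0)"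
  have f0: "{v\<in>verts (P2 B). r v = 0} = {1}" by (auto simp: P2_def r_def)
  have f1: "{v\<in>verts (P2 B). r v = 1} = {0}" by (auto simp: P2_def r_def)
  have conn: "\<forall>v'\<in>verts (P2 ({1..n} - B)). conn_in (P2 B) {v\<in>verts (P2 B). r v = v'}"
    using f0 f1 conn_single by (simp add: P2_def)
  have "img_edges (P2 B) r = {{0,1}}"
  proof (intro equalityI subsetI)
    fix e assume "e \<in> img_edges (P2 B) r"
    then show "e \<in> {{0,1}}"
      by (rule img_edgesE) (auto simp: P2_def doubleton_eq_iff r_def split: if_splits)
  next
    fix e assume "e \<in> {{0::nat,1}}"
    then show "e \<in> img_edges (P2 B) r"
      by (intro img_edgesI[of 0 1]) (auto simp: P2_def r_def)
  qed
  then have ed: "edges (P2 ({1..n} - B)) = img_edges (P2 B) r" by (simp add: P2_def)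
  have im: "r ` verts (P2 B) = verts (P2 ({1..n} - B))"
    by (auto simp: P2_def r_def)
  have lm: "\<forall>i\<in>{1..n}. leafmap (P2 ({1..n} - B)) i = r (leafmap (P2 B) i)"
    by (auto simp: P2_def r_def)
  show ?thesis using contracts_I[OF im conn lm ed] unfolding r_def .
qed

lemma S2_struct:
  assumes "G \<in> S2 n" "v \<in> verts G"
  obtains w where "verts G = {v,w}" "v \<noteq> w" "edges G = {{v,w}}"
    "lab n G w = {1..n} - lab n G v" "2 \<le> card (lab n G v)" "2 \<le> card (lab n G w)"
    "lab n G v \<subseteq> {1..n}"
proof -
  have st: "is_stree n G" and c2: "card (verts G) = 2" using assms by (auto simp: S2_def S_def)
  obtain x y where xy: "verts G = {x,y}" "x \<noteq> y" using c2 by (auto simp: card_2_iff)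
  obtain w where vw: "verts G = {v,w}" "v \<noteq> w" using xy assms(2) by (auto simp: insert_commute)
  have ce: "card (edges G) = 1" using st c2 by (simp add: is_stree_def)
  then obtain e where e: "edges G = {e}" by (auto simp: card_1_singleton_iff)
  have "e \<subseteq> {v,w}" "card e = 2" using st e vw by (auto simp: is_stree_def)
  then have "e = {v,w}" using vw(2)
    by (intro card_subset_eq) auto
  then have ev: "edges G = {{v,w}}" using e by simp
  have lm: "\<forall>i\<in>{1..n}. leafmap G i \<in> {v,w}" using st vw by (simp add: is_stree_def)
  have lw: "lab n G w = {1..n} - lab n G v" using lm vw(2) by (auto simp: lab_def)
  have dv: "card {e\<in>edges G. v \<in> e} = 1" "card {e\<in>edges G. w \<in> e} = 1" proof -
    have "{e\<in>edges G. v \<in> e} = {{v,w}}" "{e\<in>edges G. w \<in> e} = {{v,w}}" using ev by auto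
    then show "card {e\<in>edges G. v \<in> e} = 1" "card {e\<in>edges G. w \<in> e} = 1" by simp_all
  qed
  have deg: "\<forall>u\<in>verts G. card {e\<in>edges G. u \<in> e} + card {i\<in>{1..n}. leafmap G i = u} \<ge> 3"
    using st by (simp add: is_stree_def)
  then have "2 \<le> card (lab n G v)" "2 \<le> card (lab n G w)" using dv vw unfolding lab_def by force+
  moreover have "lab n G v \<subseteq> {1..n}" by (auto simp: lab_def)
  ultimately show ?thesis using that[of w] vw ev lw by blast
qed



lemma ext_a: "extremal_assignment n Z \<Longrightarrow> G \<in> S n \<Longrightarrow> Z G \<subseteq> verts G \<and> Z G \<noteq> verts G"
  unfolding extremal_assignment_def by blast

lemma ext_b: "extremal_assignment n Z \<Longrightarrow> G \<in> S n \<Longrightarrow> G' \<in> S n \<Longrightarrow> contracts n G G' \<pi> \<Longrightarrow>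
   v' \<in> verts G' \<Longrightarrow> (v' \<in> Z G' \<longleftrightarrow> (\<forall>v\<in>verts G. \<pi> v = v' \<longrightarrow> v \<in> Z G))"
  unfolding extremal_assignment_def by blast

lemma transport:
  assumes ext: "extremal_assignment n Z" and G: "G \<in> S2 n" and v: "v \<in> verts G"
  shows "P2 (lab n G v) \<in> S n \<and> (v \<in> Z G \<longleftrightarrow> 0 \<in> Z (P2 (lab n G v)))"
proof -
  obtain w where vw: "verts G = {v,w}" "v \<noteq> w" "edges G = {{v,w}}"
    "lab n G w = {1..n} - lab n G v" "2 \<le> card (lab n G v)" "2 \<le> card (lab n G w)"
    "lab n G v \<subseteq> {1..n}" using S2_struct[OF G v] by blast
  define B where "B = lab n G v"
  have PS: "P2 B \<in> S n" using P2_S[of B n] vw unfolding B_def by simp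
  have GS: "G \<in> S n" using G by (simp add: S2_def)
  define r :: "nat \<Rightarrow> nat" where "r = (\<lambda>x. if x = v then 0 else 1)"
  have im: "r ` verts G = verts (P2 B)" using vw by (auto simp: r_def P2_def)
  have f0: "{x\<in>verts G. r x = 0} = {v}" "{x\<in>verts G. r x = 1} = {w}" using vw by (auto simp: r_def)
  have conn: "\<forall>v'\<in>verts (P2 B). conn_in G {x\<in>verts G. r x = v'}"
    using f0 conn_single by (simp add: P2_def)
  have lm: "\<forall>i\<in>{1..n}. leafmap (P2 B) i = r (leafmap G i)"
    by (auto simp: P2_def r_def B_def lab_def)
  have "img_edges G r = {{0,1}}"
  proof (intro equalityI subsetI)
    fix e assume "e \<in> img_edges G r"
    then show "e \<in> {{0,1}}"
      by (rule img_edgesE) (use vw in \<open>auto simp: doubleton_eq_iff r_def\<close>)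
  next
    fix e assume "e \<in> {{0::nat,1}}"
    then show "e \<in> img_edges G r"
      by (intro img_edgesI[of v w]) (use vw in \<open>auto simp: r_def\<close>)
  qed
  then have ed: "edges (P2 B) = img_edges G r" by (simp add: P2_def)
  have ct: "contracts n G (P2 B) r" using contracts_I[OF im conn lm ed] .
  have "0 \<in> Z (P2 B) \<longleftrightarrow> (\<forall>x\<in>verts G. r x = 0 \<longrightarrow> x \<in> Z G)"
    using ext_b[OF ext GS PS ct, of 0] by (simp add: P2_def)
  also have "\<dots> \<longleftrightarrow> v \<in> Z G" using vw by (auto simp: r_def)
  finally show ?thesis using PS B_def by simp
qed

lemma C_props:
  assumes ext: "extremal_assignment n Z" and B: "B \<in> contraction_indicator n Z"
  shows "B \<subseteq> {1..n} \<and> 2 \<le> card B \<and> 2 \<le> card ({1..n} - B) \<and> P2 B \<in> S n \<and> 0 \<in> Z (P2 B)"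
proof -
  obtain G v where Gv: "B = lab n G v" "G \<in> S2 n" "v \<in> Z G"
    using B unfolding contraction_indicator_def by blast
  have "v \<in> verts G" using ext_a[OF ext, of G] Gv by (auto simp: S2_def)
  then obtain w where vw: "verts G = {v,w}" "v \<noteq> w" "edges G = {{v,w}}"
    "lab n G w = {1..n} - lab n G v" "2 \<le> card (lab n G v)" "2 \<le> card (lab n G w)"
    "lab n G v \<subseteq> {1..n}" using S2_struct[OF Gv(2)] by blast
  show ?thesis using transport[OF ext Gv(2) \<open>v \<in> verts G\<close>] vw Gv by simp
qed

lemma exclusion:
  assumes ext: "extremal_assignment n Z" and B1: "B1 \<in> contraction_indicator n Z"
    and B2: "B2 \<in> contraction_indicator n Z" and cov: "{1..n} \<subseteq> B1 \<union> B2"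
  shows False
proof -
  note p1 = C_props[OF ext B1] and p2 = C_props[OF ext B2]
  show False
  proof (cases "B1 \<inter> B2 = {}")
    case True
    then have eq: "B2 = {1..n} - B1" using cov p2 by blast
    have "0 \<in> Z (P2 B2)" using p2 by simp
    then have "1 \<in> Z (P2 B1)"
      using ext_b[OF ext _ _ contr_swap[of n B1], of 0] p1 p2 eq by (simp add: P2_def)
    moreover have "0 \<in> Z (P2 B1)" using p1 by simp
    ultimately have "Z (P2 B1) = verts (P2 B1)" using ext_a[OF ext, of "P2 B1"] p1 by (auto simp: P2_def)
    then show False using ext_a[OF ext, of "P2 B1"] p1 by simp
  next
    case False
    define X where "X = {1..n} - B2"
    define Y where "Y = {1..n} - B1"
    have XY: "X \<subseteq> {1..n}" "Y \<subseteq> {1..n}" "X \<inter> Y = {}" using cov by (auto simp: X_def Y_def)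
    have cX: "2 \<le> card X" "2 \<le> card Y" using p1 p2 by (simp_all add: X_def Y_def)
    have ne: "{1..n} - X - Y \<noteq> {}" using False p1 p2 by (auto simp: X_def Y_def)
    have P3S: "P3 X Y \<in> S n" using P3_S[OF XY cX ne] .
    have e1: "{1..n} - Y = B1" "{1..n} - X = B2" using p1 p2 by (auto simp: X_def Y_def)
    have c1: "contracts n (P3 X Y) (P2 B1) (\<lambda>x. if x = 2 then 1 else 0)"
      using contr_P3_1[OF XY] e1 by simp
    have c2: "contracts n (P3 X Y) (P2 B2) (\<lambda>x. if x = 0 then 1 else 0)"
      using contr_P3_2[OF XY] e1 by simp
    have z1: "\<forall>x\<in>verts (P3 X Y). (if x = 2 then 1 else 0) = (0::nat) \<longrightarrow> x \<in> Z (P3 X Y)"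
      using ext_b[OF ext P3S _ c1, of 0] p1 by (simp add: P2_def)
    have z2: "\<forall>x\<in>verts (P3 X Y). (if x = 0 then 1 else 0) = (0::nat) \<longrightarrow> x \<in> Z (P3 X Y)"
      using ext_b[OF ext P3S _ c2, of 0] p2 by (simp add: P2_def)
    have "verts (P3 X Y) \<subseteq> Z (P3 X Y)"
    proof
      fix x assume x: "x \<in> verts (P3 X Y)"
      show "x \<in> Z (P3 X Y)"
      proof (cases "x = 2")
        case True then show ?thesis using z2 x by simp
      next
        case False then show ?thesis using z1 x by simp
      qed
    qed
    then show False using ext_a[OF ext P3S] by blast
  qed
qed



lemma cross_edge:
  assumes "conn_in G T" "W \<subseteq> T" "u \<in> W" "w \<in> T" "w \<notin> W"
  shows "\<exists>x\<in>W. \<exists>y\<in>T-W. {x,y} \<in> edges G"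
proof -
  let ?R = "{(x, y). {x, y} \<in> edges G \<and> x \<in> T \<and> y \<in> T}"
  have "(u,w) \<in> ?R\<^sup>*" using assms unfolding conn_in_def by blast
  then have "w \<in> W \<or> (\<exists>x\<in>W. \<exists>y\<in>T-W. {x,y} \<in> edges G)"
  proof (induction rule: rtrancl_induct)
    case base then show ?case using assms(3) by simp
  next
    case (step y z)
    then show ?case by blast
  qed
  then show ?thesis using assms(5) by blast
qed



lemma grow_step:
  assumes "conn_in G T" "finite T" "finite (edges G)" "W \<subseteq> T" "u \<in> W" "card W = k"
    "k \<le> card {e\<in>edges G. e \<subseteq> W} + 1" "k < card T"
  shows "\<exists>W'. W' \<subseteq> T \<and> u \<in> W' \<and> card W' = Suc k \<and> Suc k \<le> card {e\<in>edges G. e \<subseteq> W'} + 1"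
proof -
  have "W \<noteq> T" using assms(6,8) by blast
  then obtain w where w: "w \<in> T" "w \<notin> W" using assms(4) by blast
  obtain x y where xy: "x \<in> W" "y \<in> T - W" "{x,y} \<in> edges G"
    using cross_edge[OF assms(1) assms(4) assms(5) w] by blast
  have fW: "finite W" using assms(2,4) finite_subset by blast
  have c: "card (insert y W) = Suc k" using fW xy(2) assms(6) by simp
  have sub: "insert {x,y} {e\<in>edges G. e \<subseteq> W} \<subseteq> {e\<in>edges G. e \<subseteq> insert y W}"
    using xy by blast
  have nin: "{x,y} \<notin> {e\<in>edges G. e \<subseteq> W}" using xy by blast
  have f1: "finite {e\<in>edges G. e \<subseteq> insert y W}" using assms(3) by simp
  have "card (insert {x,y} {e\<in>edges G. e \<subseteq> W}) \<le> card {e\<in>edges G. e \<subseteq> insert y W}"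
    by (rule card_mono[OF f1 sub])
  moreover have "card (insert {x,y} {e\<in>edges G. e \<subseteq> W}) = Suc (card {e\<in>edges G. e \<subseteq> W})"
    using nin assms(3) by (intro card_insert_disjoint) simp_all
  ultimately have "Suc (card {e\<in>edges G. e \<subseteq> W}) \<le> card {e\<in>edges G. e \<subseteq> insert y W}" by simp
  then have "Suc k \<le> card {e\<in>edges G. e \<subseteq> insert y W} + 1" using assms(7) by linarith
  moreover have "insert y W \<subseteq> T" "u \<in> insert y W" using assms(4,5) xy(2) by auto
  ultimately show ?thesis using c by blast
qed

lemma grow:
  assumes "conn_in G T" "finite T" "finite (edges G)" "u \<in> T" "1 \<le> k"
  shows "k \<le> card T \<longrightarrow> (\<exists>W. W \<subseteq> T \<and> u \<in> W \<and> card W = k \<and> k \<le> card {e\<in>edges G. e \<subseteq> W} + 1)"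
  using assms(5)
proof (induction k rule: nat_induct_at_least)
  case base
  have "{u} \<subseteq> T" "u \<in> {u}" "card {u} = 1" using assms(4) by auto
  then show ?case by (intro impI exI[of _ "{u}"]) simp
next
  case (Suc m)
  show ?case
  proof
    assume "Suc m \<le> card T"
    then have "m < card T" "m \<le> card T" by simp_all
    then obtain W where "W \<subseteq> T" "u \<in> W" "card W = m" "m \<le> card {e\<in>edges G. e \<subseteq> W} + 1"
      using Suc.IH by blast
    then show "\<exists>W. W \<subseteq> T \<and> u \<in> W \<and> card W = Suc m \<and> Suc m \<le> card {e\<in>edges G. e \<subseteq> W} + 1"
      using grow_step[OF assms(1,2,3)] \<open>m < card T\<close> by blast
  qed
qed

lemma conn_card:
  assumes "conn_in G T" "finite T" "T \<noteq> {}" "finite (edges G)"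
  shows "card T \<le> card {e\<in>edges G. e \<subseteq> T} + 1"
proof -
  obtain u where u: "u \<in> T" using assms(3) by blast
  have "1 \<le> card T" using assms(2,3) by (simp add: Suc_le_eq card_gt_0_iff)
  then obtain W where W: "W \<subseteq> T" "card W = card T" "card T \<le> card {e\<in>edges G. e \<subseteq> W} + 1"
    using grow[OF assms(1,2,4) u, of "card T"] by blast
  have "W = T" using card_subset_eq[OF assms(2) W(1) W(2)] .
  then show ?thesis using W(3) by simp
qed



lemma tail_from_contr:
  assumes GS: "G \<in> S n" and G2: "G' \<in> S2 n" and ct: "contracts n G G' \<pi>" and v: "v \<in> verts G"
  shows "is_tail G {x\<in>verts G. \<pi> x = \<pi> v} \<and> labs n G {x\<in>verts G. \<pi> x = \<pi> v} = lab n G' (\<pi> v)"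
proof -
  define T where "T = {x\<in>verts G. \<pi> x = \<pi> v}"
  have im: "\<pi> ` verts G = verts G'" using ct unfolding contracts_def by (elim conjE) assumption
  have cn: "\<forall>v'\<in>verts G'. conn_in G {x\<in>verts G. \<pi> x = v'}" using ct unfolding contracts_def by (elim conjE) assumption
  have lmc: "\<forall>i\<in>{1..n}. leafmap G' i = \<pi> (leafmap G i)" using ct unfolding contracts_def by (elim conjE) assumption
  have edc: "edges G' = {{\<pi> u, \<pi> w} | u w. {u, w} \<in> edges G \<and> \<pi> u \<noteq> \<pi> w}"
    using ct unfolding contracts_def by (elim conjE) assumption
  have "\<pi> v \<in> \<pi> ` verts G" using v by (rule imageI)
  then have v': "\<pi> v \<in> verts G'" using im by simp
  obtain w' where vw: "verts G' = {\<pi> v,w'}" "\<pi> v \<noteq> w'" "edges G' = {{\<pi> v,w'}}"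
    "lab n G' w' = {1..n} - lab n G' (\<pi> v)" "2 \<le> card (lab n G' (\<pi> v))" "2 \<le> card (lab n G' w')"
    "lab n G' (\<pi> v) \<subseteq> {1..n}"
    by (rule S2_struct[OF G2 v'])
  define U where "U = {x\<in>verts G. \<pi> x = w'}"
  have st: "is_stree n G" using GS by (simp add: S_def)
  have fV: "finite (verts G)" using st unfolding is_stree_def by (elim conjE) assumption
  have Esub: "\<forall>e\<in>edges G. e \<subseteq> verts G \<and> card e = 2" using st unfolding is_stree_def by (elim conjE) assumption
  have cE: "card (edges G) + 1 = card (verts G)" using st unfolding is_stree_def by (elim conjE) assumption
  have lv: "\<forall>i\<in>{1..n}. leafmap G i \<in> verts G" using st unfolding is_stree_def by (elim conjE) assumption
  have fE: "finite (edges G)"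
    by (rule finite_subset[of _ "Pow (verts G)"]) (use Esub fV in auto)
  have cT: "conn_in G T" using cn v' unfolding T_def by blast
  have cU: "conn_in G U" using cn vw unfolding U_def by blast
  have Tne: "T \<noteq> {}" using v unfolding T_def by blast
  have "w' \<in> \<pi> ` verts G" using im vw by simp
  then obtain x0 where "x0 \<in> verts G" "\<pi> x0 = w'" by blast
  then have Une: "U \<noteq> {}" unfolding U_def by blast
  have VTU: "verts G = T \<union> U"
  proof (intro equalityI subsetI)
    fix x assume x: "x \<in> verts G"
    then have "\<pi> x \<in> \<pi> ` verts G" by (rule imageI)
    then have "\<pi> x \<in> {\<pi> v, w'}" using im vw(1) by simp
    then show "x \<in> T \<union> U" using x unfolding T_def U_def by auto
  next
    fix x assume "x \<in> T \<union> U" then show "x \<in> verts G" unfolding T_def U_def by auto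
  qed
  have TU: "T \<inter> U = {}" using vw(2) unfolding T_def U_def by auto
  have fT: "finite T" "finite U" using fV unfolding T_def U_def by auto
  define ET where "ET = {e\<in>edges G. e \<subseteq> T}"
  define EU where "EU = {e\<in>edges G. e \<subseteq> U}"
  define X where "X = {e\<in>edges G. e \<inter> T \<noteq> {} \<and> e - T \<noteq> {}}"
  have Eun: "edges G = (ET \<union> EU) \<union> X"
  proof (intro equalityI subsetI)
    fix e assume e: "e \<in> edges G"
    then have "e \<subseteq> T \<union> U" using Esub VTU by blast
    then have "e \<subseteq> T \<or> e \<subseteq> U \<or> (e \<inter> T \<noteq> {} \<and> e - T \<noteq> {})" by blast
    then show "e \<in> (ET \<union> EU) \<union> X" using e unfolding ET_def EU_def X_def by blast
  next
    fix e assume "e \<in> (ET \<union> EU) \<union> X" then show "e \<in> edges G" unfolding ET_def EU_def X_def by blast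
  qed
  have ne2: "\<And>e. e \<in> edges G \<Longrightarrow> e \<noteq> {}" using Esub by force
  have d1: "ET \<inter> EU = {}" using TU ne2 unfolding ET_def EU_def by blast
  have d2: "(ET \<union> EU) \<inter> X = {}" using TU unfolding ET_def EU_def X_def by blast
  have fs: "finite ET" "finite EU" "finite X" using fE unfolding ET_def EU_def X_def by auto
  have "card (edges G) = card ET + card EU + card X"
    using Eun d1 d2 fs by (simp add: card_Un_disjoint)
  moreover have "card T \<le> card ET + 1" using conn_card[OF cT fT(1) Tne fE] unfolding ET_def .
  moreover have "card U \<le> card EU + 1" using conn_card[OF cU fT(2) Une fE] unfolding EU_def .
  moreover have "card (verts G) = card T + card U" using VTU TU fT by (simp add: card_Un_disjoint)
  ultimately have X1: "card X \<le> 1" using cE by linarith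
  have "{\<pi> v, w'} \<in> edges G'" using vw by simp
  then have "{\<pi> v, w'} \<in> {{\<pi> u, \<pi> w} | u w. {u, w} \<in> edges G \<and> \<pi> u \<noteq> \<pi> w}" by (simp only: edc)
  then obtain a b where ab: "{\<pi> v, w'} = {\<pi> a, \<pi> b}" "{a,b} \<in> edges G" "\<pi> a \<noteq> \<pi> b"
    by (simp only: mem_Collect_eq) blast
  have abV: "a \<in> verts G" "b \<in> verts G" using ab(2) Esub by auto
  have "{a,b} \<in> X"
  proof (cases "\<pi> a = \<pi> v")
    case True
    then have "a \<in> T" "b \<notin> T" using abV ab(3) unfolding T_def by auto
    then show ?thesis using ab(2) unfolding X_def by blast
  next
    case False
    then have "\<pi> b = \<pi> v" using ab(1) by (auto simp: doubleton_eq_iff)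
    then have "b \<in> T" "a \<notin> T" using abV ab(3) unfolding T_def by auto
    then show ?thesis using ab(2) unfolding X_def by blast
  qed
  then have "card X \<noteq> 0" using fs(3) by auto
  then have "card X = 1" using X1 by linarith
  moreover have "T \<subseteq> verts G" unfolding T_def by blast
  ultimately have tail: "is_tail G T" unfolding is_tail_def X_def using Tne cT by blast
  have "labs n G T = lab n G' (\<pi> v)" using lmc lv unfolding labs_def lab_def T_def by auto
  then show ?thesis using tail unfolding T_def by simp
qed



lemma case3_weights:
  fixes n :: nat
  assumes n3: "n \<ge> 3" and bd: "\<forall>B\<in>M. 2 * card B < n"
  shows "weight_data n (\<lambda>i. 2 / (of_nat n - 1) :: rat) \<and> (\<forall>B\<in>M. sum (\<lambda>i. 2 / (of_nat n - 1) :: rat) B \<le> 1)"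
proof -
  have nq: "(of_nat n :: rat) \<ge> 3" using n3 by simp
  have pos: "(of_nat n :: rat) - 1 > 0" using nq by linarith
  have w1: "0 < 2 / ((of_nat n :: rat) - 1)" using pos by simp
  have w2: "2 / ((of_nat n :: rat) - 1) \<le> 1" using pos nq by (simp add: divide_le_eq)
  have "sum (\<lambda>i. 2 / (of_nat n - 1) :: rat) {1..n} = of_nat n * (2 / (of_nat n - 1))" by simp
  also have "\<dots> > 2" using pos by (simp add: field_simps)
  finally have tot: "sum (\<lambda>i. 2 / (of_nat n - 1) :: rat) {1..n} > 2" .
  have "\<forall>B\<in>M. sum (\<lambda>i. 2 / (of_nat n - 1) :: rat) B \<le> 1"
  proof
    fix B assume "B \<in> M"
    then have "2 * card B + 1 \<le> n" using bd by force
    then have h: "2 * (of_nat (card B) :: rat) \<le> of_nat n - 1" by linarith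
    have "sum (\<lambda>i. 2 / (of_nat n - 1) :: rat) B = of_nat (card B) * (2 / (of_nat n - 1))" by simp
    also have "\<dots> \<le> 1" using h pos by (simp add: field_simps)
    finally show "sum (\<lambda>i. 2 / (of_nat n - 1) :: rat) B \<le> 1" .
  qed
  then show ?thesis using w1 w2 tot unfolding weight_data_def by simp
qed

lemma case1_weights:
  fixes n :: nat
  assumes n3: "n \<ge> 3" and j: "j \<in> {1..n}"
    and bd: "\<forall>B\<in>M. j \<notin> B \<and> B \<subseteq> {1..n} \<and> 2 \<le> card ({1..n} - B)"
  shows "weight_data n (\<lambda>i. if i = j then 1 else 1 / (of_nat n - 2) :: rat) \<and>
    (\<forall>B\<in>M. sum (\<lambda>i. if i = j then 1 else 1 / (of_nat n - 2) :: rat) B \<le> 1)"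
proof -
  define a :: "nat \<Rightarrow> rat" where "a = (\<lambda>i. if i = j then 1 else 1 / (of_nat n - 2))"
  have nq: "(of_nat n :: rat) \<ge> 3" using n3 by simp
  have pos: "(of_nat n :: rat) - 2 > 0" using nq by linarith
  have w: "\<forall>i\<in>{1..n}. 0 < a i \<and> a i \<le> 1" using pos nq by (simp add: a_def divide_le_eq)
  have "sum a {1..n} = a j + sum a ({1..n} - {j})" using j by (simp add: sum.remove)
  also have "sum a ({1..n} - {j}) = sum (\<lambda>i. 1 / (of_nat n - 2)) ({1..n} - {j})"
    by (rule sum.cong) (auto simp: a_def)
  also have "\<dots> = (of_nat n - 1) * (1 / (of_nat n - 2))" using j n3 by (simp add: of_nat_diff)
  finally have "sum a {1..n} = 1 + (of_nat n - 1) / (of_nat n - 2)" by (simp add: a_def)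
  also have "\<dots> > 2" using pos by (simp add: field_simps)
  finally have tot: "sum a {1..n} > 2" .
  have "\<forall>B\<in>M. sum a B \<le> 1"
  proof
    fix B assume B: "B \<in> M"
    then have jB: "j \<notin> B" and Bs: "B \<subseteq> {1..n}" and c: "2 \<le> card ({1..n} - B)" using bd by auto
    have "card ({1..n} - B) = n - card B" using Bs by (simp add: card_Diff_subset finite_subset)
    then have "card B + 2 \<le> n" using c by linarith
    then have h: "(of_nat (card B) :: rat) \<le> of_nat n - 2" by linarith
    have "sum a B = sum (\<lambda>i. 1 / (of_nat n - 2)) B" by (rule sum.cong) (use jB in \<open>auto simp: a_def\<close>)
    also have "\<dots> = of_nat (card B) * (1 / (of_nat n - 2))" by simp
    also have "\<dots> \<le> 1" using h pos by (simp add: field_simps)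
    finally show "sum a B \<le> 1" .
  qed
  then show ?thesis using w tot unfolding weight_data_def a_def by simp
qed



lemma arith1:
  fixes N M :: rat
  assumes "N \<ge> 3" "M \<ge> 2" "M \<le> N"
  shows "N * (1 / (2 * N * N)) + (M - 1) * (2 / (2 * M - 1)) \<le> 1"
proof -
  have p: "N > 0" "2 * M - 1 > 0" using assms by linarith+
  have e1: "N * (1 / (2 * N * N)) = 1 / (2 * N)" using p by (simp add: field_simps)
  have e2: "(M - 1) * (2 / (2 * M - 1)) = 1 - 1 / (2 * M - 1)" using p by (simp add: field_simps)
  have "1 / (2 * N) \<le> 1 / (2 * M - 1)" using p assms by (intro divide_left_mono) auto
  then show ?thesis using e1 e2 by linarith
qed

lemma case2_weights:
  fixes n :: nat
  assumes n3: "n \<ge> 3" and j: "j \<in> {1..n}" and B1: "B1 \<subseteq> {1..n}" "j \<in> B1"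
    and mm2: "2 \<le> card ({1..n} - B1)"
    and bd: "\<forall>B\<in>M. B = B1 \<or> (j \<notin> B \<and> B \<subseteq> {1..n} \<and> (\<exists>x\<in>{1..n}. x \<notin> B1 \<and> x \<notin> B))"
  shows "\<exists>a. weight_data n a \<and> (\<forall>B\<in>M. sum a B \<le> 1)"
proof -
  define b where "b = card B1"
  define mm where "mm = card ({1..n} - B1)"
  define N :: rat where "N = of_nat n"
  define r :: rat where "r = 1 / (2 * N * N)"
  define s :: rat where "s = 2 / (2 * of_nat mm - 1)"
  define a :: "nat \<Rightarrow> rat" where "a = (\<lambda>i. if i = j then 1 - (of_nat b - 1) * r else if i \<in> B1 then r else s)"
  have fB1: "finite B1" using B1(1) finite_subset by blast
  have "card B1 > 0" using fB1 B1(2) by (auto simp: card_gt_0_iff)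
  then have b1: "b \<ge> 1" unfolding b_def by simp
  have "card ({1..n} - B1) = card {1..n} - card B1" by (rule card_Diff_subset[OF fB1 B1(1)])
  moreover have "card B1 \<le> card {1..n}" using B1(1) by (intro card_mono) auto
  ultimately have bn: "b + mm = n" unfolding b_def mm_def by simp
  have N3: "N \<ge> 3" using n3 unfolding N_def by simp
  have Mq: "(of_nat mm :: rat) \<ge> 2" "(of_nat mm :: rat) \<le> N" using mm2 bn unfolding mm_def[symmetric] N_def by simp_all
  have bq: "(of_nat b :: rat) \<ge> 1" "(of_nat b :: rat) \<le> N" using b1 bn unfolding N_def by simp_all
  have rpos: "r > 0" using N3 unfolding r_def by simp
  have nr: "N * r = 1 / (2 * N)" using N3 unfolding r_def by (simp add: field_simps)
  have nr6: "N * r \<le> 1/6" using N3 unfolding nr by (simp add: field_simps)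
  have br: "(of_nat b - 1) * r \<le> N * r" using bq rpos by (intro mult_right_mono) auto
  have br0: "(of_nat b - 1) * r \<ge> 0" using bq rpos by simp
  have "1 * r \<le> N * r" using rpos N3 by (intro mult_right_mono) auto
  then have r1: "r \<le> 1" using nr6 by linarith
  have spos: "s > 0" "s \<le> 1" using Mq unfolding s_def by (simp_all add: field_simps)
  have aj: "0 < 1 - (of_nat b - 1) * r" "1 - (of_nat b - 1) * r \<le> 1" using br br0 nr6 by linarith+
  have w: "\<forall>i\<in>{1..n}. 0 < a i \<and> a i \<le> 1"
  proof
    fix i show "0 < a i \<and> a i \<le> 1" using aj rpos r1 spos unfolding a_def by (simp split: if_split)
  qed
  have cB1j: "card (B1 - {j}) = b - 1" using B1(2) fB1 unfolding b_def by simp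
  have "sum a B1 = a j + sum a (B1 - {j})" using fB1 B1(2) by (simp add: sum.remove)
  also have "sum a (B1 - {j}) = sum (\<lambda>i. r) (B1 - {j})" by (rule sum.cong) (auto simp: a_def)
  also have "\<dots> = (of_nat b - 1) * r" using cB1j b1 by (simp add: of_nat_diff)
  finally have sB1: "sum a B1 = 1" by (simp add: a_def)
  have "sum a ({1..n} - B1) = sum (\<lambda>i. s) ({1..n} - B1)" by (rule sum.cong) (use B1 in \<open>auto simp: a_def\<close>)
  also have "\<dots> = of_nat mm * s" unfolding mm_def by simp
  also have "\<dots> > 1" using Mq unfolding s_def by (simp add: field_simps)
  finally have sC: "sum a ({1..n} - B1) > 1" .
  have "sum a {1..n} = sum a ({1..n} - B1) + sum a B1" using B1(1) by (simp add: sum.subset_diff)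
  then have tot: "sum a {1..n} > 2" using sB1 sC by simp
  have "\<forall>B\<in>M. sum a B \<le> 1"
  proof
    fix B assume "B \<in> M"
    then consider "B = B1" | "j \<notin> B" "B \<subseteq> {1..n}" "\<exists>x\<in>{1..n}. x \<notin> B1 \<and> x \<notin> B" using bd by blast
    then show "sum a B \<le> 1"
    proof cases
      case 1 then show ?thesis using sB1 by simp
    next
      case 2
      then obtain x where x: "x \<in> {1..n}" "x \<notin> B1" "x \<notin> B" by blast
      have fB: "finite B" using 2(2) finite_subset by blast
      have "sum a B = sum a (B \<inter> B1) + sum a (B - B1)" using fB by (rule sum.Int_Diff)
      also have "sum a (B \<inter> B1) = sum (\<lambda>i. r) (B \<inter> B1)" by (rule sum.cong) (use 2(1) in \<open>auto simp: a_def\<close>)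
      also have "\<dots> = of_nat (card (B \<inter> B1)) * r" by simp
      also have "sum a (B - B1) = sum (\<lambda>i. s) (B - B1)" by (rule sum.cong) (use 2(1) in \<open>auto simp: a_def\<close>)
      also have "\<dots> = of_nat (card (B - B1)) * s" by simp
      finally have eq: "sum a B = of_nat (card (B \<inter> B1)) * r + of_nat (card (B - B1)) * s" .
      have "card (B \<inter> B1) \<le> n" using card_mono[of "{1..n}" "B \<inter> B1"] 2(2) by auto
      then have c1: "of_nat (card (B \<inter> B1)) * r \<le> N * r" using rpos unfolding N_def by (intro mult_right_mono) auto
      have sub: "B - B1 \<subseteq> ({1..n} - B1) - {x}" using 2(2) x by auto
      have "card (B - B1) \<le> card (({1..n} - B1) - {x})" by (rule card_mono[OF _ sub]) simp
      also have "\<dots> = mm - 1" using x unfolding mm_def by simp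
      finally have "card (B - B1) \<le> mm - 1" .
      then have "card (B - B1) + 1 \<le> mm" using mm2 unfolding mm_def[symmetric] by linarith
      then have "(of_nat (card (B - B1) + 1) :: rat) \<le> of_nat mm" by (simp only: of_nat_le_iff)
      then have "(of_nat (card (B - B1)) :: rat) \<le> of_nat mm - 1" by simp
      then have c2: "of_nat (card (B - B1)) * s \<le> (of_nat mm - 1) * s" using spos by (intro mult_right_mono) auto
      have "N * r + (of_nat mm - 1) * s \<le> 1" using arith1[OF N3 Mq] unfolding r_def s_def .
      then show ?thesis using eq c1 c2 by linarith
    qed
  qed
  then show ?thesis using w tot unfolding weight_data_def by blast
qed



lemma main_ZA:
  assumes ext: "extremal_assignment n Z" and sm: "smooth n Z"
    and a0: "\<forall>i\<in>{1..n}. 0 \<le> a i"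
    and bd: "\<forall>B\<in>maximal_elems (contraction_indicator n Z). sum a B \<le> 1"
  shows "\<forall>G\<in>S n. Z G \<subseteq> ZA n a G"
proof (intro ballI subsetI)
  fix G v assume G: "G \<in> S n" and v: "v \<in> Z G"
  have vV: "v \<in> verts G" using ext_a[OF ext G] v by blast
  obtain G' \<pi> where G': "G' \<in> S2 n" "contracts n G G' \<pi>" "\<pi> v \<in> Z G'"
    using sm G v unfolding smooth_def by blast
  define T where "T = {x\<in>verts G. \<pi> x = \<pi> v}"
  have tl: "is_tail G T" "labs n G T = lab n G' (\<pi> v)"
    using tail_from_contr[OF G G'(1,2) vV] unfolding T_def by blast+
  have vT: "v \<in> T" using vV unfolding T_def by simp
  let ?C = "contraction_indicator n Z"
  have BC: "lab n G' (\<pi> v) \<in> ?C" unfolding contraction_indicator_def using G' by blast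
  have "?C \<subseteq> Pow {1..n}" unfolding contraction_indicator_def lab_def by blast
  then have fin: "finite ?C" by (rule finite_subset) simp
  obtain m where m: "m \<in> ?C" "lab n G' (\<pi> v) \<subseteq> m" "\<forall>b\<in>?C. m \<subseteq> b \<longrightarrow> m = b"
    using finite_has_maximal2[OF fin BC] by blast
  have mM: "m \<in> maximal_elems ?C" unfolding maximal_elems_def using m by blast
  have mn: "m \<subseteq> {1..n}" using C_props[OF ext m(1)] by blast
  have fm: "finite m" using mn finite_subset by blast
  have "sum a (lab n G' (\<pi> v)) \<le> sum a m"
    by (rule sum_mono2[OF fm m(2)]) (use a0 mn in blast)
  also have "\<dots> \<le> 1" using bd mM by blast
  finally have "sum a (labs n G T) \<le> 1" using tl(2) by simp
  then show "v \<in> ZA n a G" unfolding ZA_def using vV tl(1) vT by blast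
qed

theorem proposition7p14:
  fixes n :: nat and Z :: "stree \<Rightarrow> nat set"
  assumes "n \<ge> 3"
    and "extremal_assignment n Z"
    and "smooth n Z"
    and "(\<exists>j\<in>{1..n}. \<forall>B\<in>maximal_elems (contraction_indicator n Z). j \<notin> B)
       \<or> (\<exists>j\<in>{1..n}. card {B\<in>maximal_elems (contraction_indicator n Z). j \<in> B} = 1)
       \<or> (\<forall>B\<in>maximal_elems (contraction_indicator n Z). 2 * card B < n)"
  shows "\<exists>a. weight_data n a \<and> (\<forall>G\<in>S n. Z G \<subseteq> ZA n a G)"
proof -
  let ?C = "contraction_indicator n Z"
  let ?M = "maximal_elems ?C"
  have MC: "?M \<subseteq> ?C" unfolding maximal_elems_def by blast
  have props: "\<And>B. B \<in> ?M \<Longrightarrow> B \<subseteq> {1..n} \<and> 2 \<le> card B \<and> 2 \<le> card ({1..n} - B)"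
    using C_props[OF assms(2)] MC by blast
  have ex: "\<exists>a. weight_data n a \<and> (\<forall>B\<in>?M. sum a B \<le> 1)"
    using assms(4)
  proof (elim disjE)
    assume "\<exists>j\<in>{1..n}. \<forall>B\<in>?M. j \<notin> B"
    then obtain j where j: "j \<in> {1..n}" "\<forall>B\<in>?M. j \<notin> B" by blast
    have "\<forall>B\<in>?M. j \<notin> B \<and> B \<subseteq> {1..n} \<and> 2 \<le> card ({1..n} - B)" using j props by blast
    from case1_weights[OF assms(1) j(1) this] show ?thesis by blast
  next
    assume "\<exists>j\<in>{1..n}. card {B\<in>?M. j \<in> B} = 1"
    then obtain j where j: "j \<in> {1..n}" "card {B\<in>?M. j \<in> B} = 1" by blast
    then obtain B1 where B1: "{B\<in>?M. j \<in> B} = {B1}" by (auto simp: card_1_singleton_iff)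
    have B1M: "B1 \<in> ?M" "j \<in> B1" using B1 by blast+
    have B1p: "B1 \<subseteq> {1..n}" "2 \<le> card ({1..n} - B1)" using props[OF B1M(1)] by blast+
    have "\<forall>B\<in>?M. B = B1 \<or> (j \<notin> B \<and> B \<subseteq> {1..n} \<and> (\<exists>x\<in>{1..n}. x \<notin> B1 \<and> x \<notin> B))"
    proof
      fix B assume B: "B \<in> ?M"
      show "B = B1 \<or> (j \<notin> B \<and> B \<subseteq> {1..n} \<and> (\<exists>x\<in>{1..n}. x \<notin> B1 \<and> x \<notin> B))"
      proof (cases "j \<in> B")
        case True then have "B \<in> {B\<in>?M. j \<in> B}" using B by blast
        then show ?thesis using B1 by blast
      next
        case False
        have "\<not> {1..n} \<subseteq> B1 \<union> B"
          using exclusion[OF assms(2), of B1 B] MC B1M(1) B by blast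
        then show ?thesis using False props[OF B] by blast
      qed
    qed
    from case2_weights[OF assms(1) j(1) B1p(1) B1M(2) B1p(2) this] show ?thesis .
  next
    assume "\<forall>B\<in>?M. 2 * card B < n"
    from case3_weights[OF assms(1) this] show ?thesis by blast
  qed
  then obtain a where a: "weight_data n a" "\<forall>B\<in>?M. sum a B \<le> 1" by blast
  have "\<forall>i\<in>{1..n}. 0 \<le> a i" using a(1) unfolding weight_data_def by (simp add: order_less_imp_le)
  then show ?thesis using main_ZA[OF assms(2,3) _ a(2)] a(1) by blast
qed

end
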